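(* With $s=\sqrt{(u_3+u_4)^2-4u_1u_2}$, $$\sum_{n\ge0}\Bigl(\sum_{\sigma\in\mathfrak S_n}(u_1u_2)^{{\rm L}(\sigma)}u_3^{{\rm lrda}(\sigma)}u_4^{{\rm dd}(\sigma)}\beta^{{\rm RLmin}(\sigma)}\Bigr)\frac{t^n}{n!}=e^{\frac{\beta}{2}(u_3-u_4)t}\left(\cosh\Bigl(\frac{st}{2}\Bigr)-\frac{u_3+u_4}{s}\sinh\Bigl(\frac{st}{2}\Bigr)\right)^{-\beta}.$$
   Context: For $\sigma=\sigma_1\cdots\sigma_n\in\mathfrak S_n$ ($\mathfrak S_0$ = empty permutation, contributing $1$): ${\rm L}(\sigma)$ is the number of $i$ with $1\le i<n$ and $\sigma_{i-1}<\sigma_i>\sigma_{i+1}$ (convention $\sigma_0=0$); ${\rm lrda}(\sigma)$ (left-right double ascents) is the number of $i$ with $1\le i\le n$ and $\sigma_{i-1}<\sigma_i<\sigma_{i+1}$ (conventions $\sigma_0=0$, $\sigma_{n+1}=+\infty$); ${\rm dd}(\sigma)$ is the number of $i$ with $1<i<n$ and $\sigma_{i-1}>\sigma_i>\sigma_{i+1}$; ${\rm RLmin}(\sigma)$ is the number of $i$ with $\sigma_j>\sigma_i$ for all $j>i$. Series are formal power series in $t$; the bracketed series depends only on $s^2$, has constant term $1$, and $G^c:=\exp(c\log G)$. *)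

theory Defs
  imports "HOL-Combinatorics.Multiset_Permutations" "HOL-Computational_Algebra.Formal_Power_Series" Complex_Main
begin

(* A permutation sigma = sigma_1 ... sigma_n of {1..n} is a list xs; sigma_i = xs ! (i-1).
   pval xs i gives sigma_i for 1 <= i <= n and the convention sigma_0 = 0. *)
definition pval :: "nat list \<Rightarrow> nat \<Rightarrow> nat" where
  "pval xs i = (if i = 0 then 0 else xs ! (i - 1))"

definition statL :: "nat list \<Rightarrow> nat" where
  "statL xs = card {i. 1 \<le> i \<and> i < length xs \<and>
      pval xs (i - 1) < pval xs i \<and> pval xs i > pval xs (i + 1)}"

(* lrda(sigma): 1 <= i <= n with sigma_{i-1} < sigma_i < sigma_{i+1}, sigma_0 = 0, sigma_{n+1} = +infinity *)
definition lrda :: "nat list \<Rightarrow> nat" where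
  "lrda xs = card {i. 1 \<le> i \<and> i \<le> length xs \<and>
      pval xs (i - 1) < pval xs i \<and> (i = length xs \<or> pval xs i < pval xs (i + 1))}"

definition dd :: "nat list \<Rightarrow> nat" where
  "dd xs = card {i. 1 < i \<and> i < length xs \<and>
      pval xs (i - 1) > pval xs i \<and> pval xs i > pval xs (i + 1)}"

definition RLmin :: "nat list \<Rightarrow> nat" where
  "RLmin xs = card {i. 1 \<le> i \<and> i \<le> length xs \<and>
      (\<forall>j. i < j \<and> j \<le> length xs \<longrightarrow> pval xs j > pval xs i)}"

definition fps_cosh_ser :: "'a::field_char_0 \<Rightarrow> 'a fps" where
  "fps_cosh_ser a = Abs_fps (\<lambda>n. if even n then a ^ n / of_nat (fact n) else 0)"

(* formal power series in t: sinh(s t / 2) / s, i.e. sum_k s^(2k) t^(2k+1) / (2^(2k+1) (2k+1)!) *)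
definition fps_sinh_half_div :: "'a::field_char_0 \<Rightarrow> 'a fps" where
  "fps_sinh_half_div s = Abs_fps (\<lambda>n. if odd n then s ^ (n - 1) / (2 ^ n * of_nat (fact n)) else 0)"

definition fps_log :: "'a::field_char_0 fps \<Rightarrow> 'a fps" where
  "fps_log G = fps_ln 1 oo (G - 1)"

definition fps_gpow :: "'a::field_char_0 fps \<Rightarrow> 'a \<Rightarrow> 'a fps" where
  "fps_gpow G c = fps_exp c oo fps_log G"

end

theory Submission
  imports Defs
begin


fun rl :: "nat list \<Rightarrow> nat" where
  "rl [] = 0"
| "rl (x # xs) = (if \<forall>y\<in>set xs. x < y then 1 else 0) + rl xs"

lemma rl_append:
  assumes "\<forall>x\<in>set a. m < x" "\<forall>x\<in>set g. m < x"
  shows "rl (a @ m # g) = Suc (rl g)"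
  using assms by (induction a) auto


lemma rl_prod:
  "(b::complex) ^ rl xs = (\<Prod>i<length xs. if \<forall>j. i < j \<and> j < length xs \<longrightarrow> xs ! i < xs ! j then b else 1)"
proof (induction xs)
  case Nil
  then show ?case by simp
next
  case (Cons x xs)
  have e0: "(\<forall>j. 0 < j \<and> j < Suc (length xs) \<longrightarrow> x < (x # xs) ! j) \<longleftrightarrow> (\<forall>y\<in>set xs. x < y)"
  proof
    assume H: "\<forall>j. 0 < j \<and> j < Suc (length xs) \<longrightarrow> x < (x # xs) ! j"
    show "\<forall>y\<in>set xs. x < y"
    proof
      fix y assume "y \<in> set xs"
      then obtain k where "k < length xs" "y = xs ! k" by (metis in_set_conv_nth)
      then show "x < y" using H[rule_format, of "Suc k"] by simp
    qed
  next
    assume H: "\<forall>y\<in>set xs. x < y"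
    show "\<forall>j. 0 < j \<and> j < Suc (length xs) \<longrightarrow> x < (x # xs) ! j"
    proof (intro allI impI)
      fix j assume j: "0 < j \<and> j < Suc (length xs)"
      then obtain k where "j = Suc k" by (cases j) auto
      then show "x < (x # xs) ! j" using H j by simp
    qed
  qed
  have eS: "(\<forall>j. Suc i < j \<and> j < Suc (length xs) \<longrightarrow> (x # xs) ! Suc i < (x # xs) ! j) \<longleftrightarrow>
        (\<forall>j. i < j \<and> j < length xs \<longrightarrow> xs ! i < xs ! j)" for i
  proof
    assume H: "\<forall>j. Suc i < j \<and> j < Suc (length xs) \<longrightarrow> (x # xs) ! Suc i < (x # xs) ! j"
    show "\<forall>j. i < j \<and> j < length xs \<longrightarrow> xs ! i < xs ! j"
      by (metis H Suc_less_eq nth_Cons_Suc)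
  next
    assume H: "\<forall>j. i < j \<and> j < length xs \<longrightarrow> xs ! i < xs ! j"
    show "\<forall>j. Suc i < j \<and> j < Suc (length xs) \<longrightarrow> (x # xs) ! Suc i < (x # xs) ! j"
    proof (intro allI impI)
      fix j assume j: "Suc i < j \<and> j < Suc (length xs)"
      then obtain k where "j = Suc k" by (cases j) auto
      then show "(x # xs) ! Suc i < (x # xs) ! j" using H j by simp
    qed
  qed
  show ?case
    unfolding length_Cons prod.lessThan_Suc_shift
    using e0 eS Cons by (simp add: power_add)
qed

lemma pow_card_prod:
  assumes "finite A"
  shows "(c::complex) ^ card {i\<in>A. P i} = (\<Prod>i\<in>A. if P i then c else 1)"
proof -
  have "(\<Prod>i\<in>A. if P i then c else 1) = c ^ card (A \<inter> {x. P x})"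
    using assms by (simp add: prod.If_cases)
  moreover have "A \<inter> {x. P x} = {i\<in>A. P i}" by blast
  ultimately show ?thesis by simp
qed


lemma sum_pow_card:
  assumes "finite R"
  shows "(\<Sum>T\<in>Pow R. g (card T)) = (\<Sum>j\<le>card R. of_nat (card R choose j) * (g j :: complex))"
proof -
  have "(\<Sum>T\<in>Pow R. g (card T)) = (\<Sum>j\<le>card R. \<Sum>T\<in>{T\<in>Pow R. card T = j}. g (card T))"
    by (rule sum.group[symmetric]) (use assms card_mono in \<open>auto simp: finite_Pow_iff\<close>)
  also have "\<dots> = (\<Sum>j\<le>card R. of_nat (card R choose j) * g j)"
  proof (rule sum.cong[OF refl])
    fix j
    have "(\<Sum>T\<in>{T\<in>Pow R. card T = j}. g (card T)) = (\<Sum>T\<in>{T\<in>Pow R. card T = j}. g j)"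
      by (rule sum.cong) auto
    also have "\<dots> = of_nat (card {T. T \<subseteq> R \<and> card T = j}) * g j"
      by simp
    also have "\<dots> = of_nat (card R choose j) * g j"
      using n_subsets[OF assms] by simp
    finally show "(\<Sum>T\<in>{T\<in>Pow R. card T = j}. g (card T)) = of_nat (card R choose j) * g j" .
  qed
  finally show ?thesis .
qed

lemma sum_sum_mult:
  "(\<Sum>a\<in>A. \<Sum>g\<in>B. (c::complex) * (f a * h g)) = c * ((\<Sum>a\<in>A. f a) * (\<Sum>g\<in>B. h g))"
proof -
  have "(\<Sum>a\<in>A. \<Sum>g\<in>B. c * (f a * h g)) = (\<Sum>a\<in>A. (c * f a) * (\<Sum>g\<in>B. h g))"
    by (simp add: sum_distrib_left mult.assoc)
  also have "\<dots> = (\<Sum>a\<in>A. c * f a) * (\<Sum>g\<in>B. h g)"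
    by (simp add: sum_distrib_right)
  also have "\<dots> = c * ((\<Sum>a\<in>A. f a) * (\<Sum>g\<in>B. h g))"
    by (simp add: sum_distrib_left[symmetric] mult.assoc)
  finally show ?thesis .
qed

lemma perm_split:
  assumes "finite S" "m \<in> S"
  shows "(\<Sum>\<sigma>\<in>permutations_of_set S. w \<sigma>) =
    (\<Sum>T\<in>Pow (S - {m}). \<Sum>a\<in>permutations_of_set T. \<Sum>g\<in>permutations_of_set (S - {m} - T). w (a @ m # g))"
proof -
  define R where "R = S - {m}"
  define Sig where "Sig = (SIGMA T:Pow R. permutations_of_set T \<times> permutations_of_set (R - T))"
  define h where "h = (\<lambda>(T::'a set, a::'a list, g::'a list). a @ m # g)"
  have finR: "finite R" using assms by (simp add: R_def)
  have fin: "finite Sig" unfolding Sig_def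
    using finR by (intro finite_SigmaI) (auto intro: finite_subset)
  have inj: "inj_on h Sig"
  proof (rule inj_onI)
    fix x y assume x: "x \<in> Sig" and y: "y \<in> Sig" and e: "h x = h y"
    obtain T a g where xx: "x = (T, a, g)" by (cases x) auto
    obtain T' a' g' where yy: "y = (T', a', g')" by (cases y) auto
    have "m \<notin> set a" "m \<notin> set a'" "m \<notin> set g" using x y unfolding xx yy Sig_def R_def permutations_of_set_def by auto
    then have "a = a' \<and> g = g'" using e append_Cons_eq_iff[of m a g a' g'] unfolding xx yy h_def by simp
    moreover have "T = set a" "T' = set a'" using x y unfolding xx yy Sig_def permutations_of_set_def by auto
    ultimately show "x = y" unfolding xx yy by simp
  qed
  have img: "h ` Sig = permutations_of_set S"
  proof
    show "h ` Sig \<subseteq> permutations_of_set S"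
      using assms unfolding Sig_def h_def R_def permutations_of_set_def by auto
  next
    show "permutations_of_set S \<subseteq> h ` Sig"
    proof
      fix \<sigma> assume s: "\<sigma> \<in> permutations_of_set S"
      then have "m \<in> set \<sigma>" using assms by (simp add: permutations_of_set_def)
      then obtain a g where sg: "\<sigma> = a @ m # g" by (meson split_list)
      have d: "distinct \<sigma>" "set \<sigma> = S" using s by (auto simp: permutations_of_set_def)
      have "(set a, a, g) \<in> Sig"
        using d unfolding sg Sig_def R_def permutations_of_set_def by auto
      moreover have "h (set a, a, g) = \<sigma>" by (simp add: h_def sg)
      ultimately show "\<sigma> \<in> h ` Sig" by force
    qed
  qed
  have "(\<Sum>\<sigma>\<in>permutations_of_set S. w \<sigma>) = (\<Sum>x\<in>Sig. w (h x))"
    using sum.reindex[OF inj, of w] img by simp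
  also have "\<dots> = (\<Sum>T\<in>Pow R. \<Sum>ag\<in>permutations_of_set T \<times> permutations_of_set (R - T). w (h (T, ag)))"
    unfolding Sig_def by (subst sum.Sigma) (use finR in \<open>auto intro: finite_subset simp: split_def\<close>)
  also have "\<dots> = (\<Sum>T\<in>Pow R. \<Sum>a\<in>permutations_of_set T. \<Sum>g\<in>permutations_of_set (R - T). w (a @ m # g))"
    by (simp add: h_def sum.cartesian_product split_def)
  finally show ?thesis by (simp add: R_def)
qed

context
  fixes p u3 u4 \<beta> :: complex
begin

definition wt :: "nat \<Rightarrow> nat \<Rightarrow> nat \<Rightarrow> complex" where
  "wt a b c = (if a < b \<and> c < b then p else 1) * (if a < b \<and> b < c then u3 else 1)
     * (if b < a \<and> c < b then u4 else 1)"

fun W :: "nat \<Rightarrow> nat \<Rightarrow> nat list \<Rightarrow> complex" where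
  "W l r [] = 1"
| "W l r [x] = wt l x r"
| "W l r (x # y # zs) = wt l x y * W x r (y # zs)"

lemma W_Cons: "W l r (x # xs) = wt l x (if xs = [] then r else hd xs) * W x r xs"
  by (cases xs) auto

declare W.simps(2,3)[simp del]

lemma W_append:
  "W l r (xs @ m # ys) = W l m xs * wt (if xs = [] then l else last xs) m (if ys = [] then r else hd ys) * W m r ys"
proof (induction xs arbitrary: l)
  case Nil
  then show ?case by (simp add: W_Cons)
next
  case (Cons x xs)
  show ?case
    using Cons[of x] by (simp add: W_Cons)
qed

lemma W_left:
  assumes "\<forall>x\<in>set xs. l < x \<and> l' < x"
  shows "W l r xs = W l' r xs"
  using assms by (cases xs) (auto simp: W_Cons wt_def)

lemma W_right:
  assumes "\<forall>x\<in>set xs. (x < r \<longleftrightarrow> x < r') \<and> (r < x \<longleftrightarrow> r' < x)"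
  shows "W l r xs = W l r' xs"
  using assms
proof (induction xs arbitrary: l)
  case Nil
  then show ?case by simp
next
  case (Cons x xs)
  then show ?case by (auto simp: W_Cons wt_def)
qed

lemma W_nth:
  "W l r xs = (\<Prod>i<length xs. wt ((l # xs @ [r]) ! i) ((l # xs @ [r]) ! Suc i) ((l # xs @ [r]) ! Suc (Suc i)))"
proof (induction xs arbitrary: l)
  case Nil
  then show ?case by simp
next
  case (Cons x xs)
  show ?case
    unfolding length_Cons prod.lessThan_Suc_shift
    using Cons[of x] by (cases xs) (auto simp: W_Cons nth_append)
qed


definition mid :: "nat \<Rightarrow> nat \<Rightarrow> complex" where
  "mid j k = (if j = 0 \<and> k = 0 then p else if j = 0 then u3 else if k = 0 then u4 else 1)"

fun aseq :: "nat \<Rightarrow> complex" where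
  "aseq 0 = 1"
| "aseq (Suc k) = (\<Sum>j\<le>k. of_nat (k choose j) * aseq j * aseq (k - j) * mid j (k - j))"

fun fseq :: "nat \<Rightarrow> complex" where
  "fseq 0 = 1"
| "fseq (Suc k) = \<beta> * (\<Sum>j\<le>k. of_nat (k choose j) * aseq j * fseq (k - j) * (if j = 0 then u3 else 1))"



lemma wt_mid:
  assumes "l < m" "r < m" "\<forall>x\<in>set a. m < x" "\<forall>x\<in>set g. m < x"
  shows "wt (if a = [] then l else last a) m (if g = [] then r else hd g) = mid (length a) (length g)"
proof -
  have "a \<noteq> [] \<Longrightarrow> m < last a" using assms(3) last_in_set by blast
  moreover have "g \<noteq> [] \<Longrightarrow> m < hd g" using assms(4) hd_in_set by blast
  ultimately show ?thesis using assms(1,2) by (auto simp: wt_def mid_def)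
qed

lemma wt_midF:
  assumes "l < m" "m < r" "\<forall>x\<in>set a. m < x" "\<forall>x\<in>set g. m < x"
  shows "wt (if a = [] then l else last a) m (if g = [] then r else hd g) = (if a = [] then u3 else 1)"
proof -
  have "a \<noteq> [] \<Longrightarrow> m < last a" using assms(3) last_in_set by blast
  moreover have "g \<noteq> [] \<Longrightarrow> m < hd g" using assms(4) hd_in_set by blast
  ultimately show ?thesis using assms(1,2) by (auto simp: wt_def)
qed

lemma perm_min:
  fixes S :: "nat set"
  assumes "finite S" "S \<noteq> {}"
  obtains m where "m \<in> S" "\<forall>x\<in>S - {m}. m < x" "card S = Suc (card (S - {m}))"
proof -
  have "Min S \<in> S" using assms by simp
  moreover have "\<forall>x\<in>S - {Min S}. Min S < x" using assms by (auto simp: order.not_eq_order_implies_strict)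
  moreover have "card S = Suc (card (S - {Min S}))" using assms calculation(1)
    by (metis card_Suc_Diff1)
  ultimately show ?thesis using that by blast
qed

lemma sumA:
  "finite S \<Longrightarrow> \<forall>x\<in>S. l < x \<and> r < x \<Longrightarrow> (\<Sum>a\<in>permutations_of_set S. W l r a) = aseq (card S)"
proof (induction "card S" arbitrary: S l r rule: less_induct)
  case less
  show ?case
  proof (cases "S = {}")
    case True
    then show ?thesis by simp
  next
    case False
    obtain m where m: "m \<in> S" "\<forall>x\<in>S - {m}. m < x" "card S = Suc (card (S - {m}))"
      using perm_min[OF less.prems(1) False] by blast
    define R where "R = S - {m}"
    have finR: "finite R" using less.prems by (simp add: R_def)
    have "(\<Sum>a\<in>permutations_of_set S. W l r a) =
      (\<Sum>T\<in>Pow R. \<Sum>a\<in>permutations_of_set T. \<Sum>g\<in>permutations_of_set (R - T). W l r (a @ m # g))"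
      unfolding R_def by (rule perm_split[OF less.prems(1) m(1)])
    also have "\<dots> = (\<Sum>T\<in>Pow R. \<Sum>a\<in>permutations_of_set T. \<Sum>g\<in>permutations_of_set (R - T).
        mid (card T) (card (R - T)) * (W l m a * W m r g))"
    proof (intro sum.cong refl)
      fix T a g assume T: "T \<in> Pow R" and a: "a \<in> permutations_of_set T" and g: "g \<in> permutations_of_set (R - T)"
      have sa: "set a = T" "length a = card T" using a by (auto simp: permutations_of_set_def length_finite_permutations_of_set)
      have sg: "set g = R - T" "length g = card (R - T)" using g by (auto simp: permutations_of_set_def length_finite_permutations_of_set)
      have ma: "\<forall>x\<in>set a. m < x" "\<forall>x\<in>set g. m < x" using sa sg T m(2) unfolding R_def by auto
      have "l < m" "r < m" using less.prems(2) m(1) by auto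
      then show "W l r (a @ m # g) = mid (card T) (card (R - T)) * (W l m a * W m r g)"
        using wt_mid[OF _ _ ma] sa sg by (simp add: W_append)
    qed
    also have "\<dots> = (\<Sum>T\<in>Pow R. mid (card T) (card (R - T)) *
        ((\<Sum>a\<in>permutations_of_set T. W l m a) * (\<Sum>g\<in>permutations_of_set (R - T). W m r g)))"
      by (simp add: sum_sum_mult)
    also have "\<dots> = (\<Sum>T\<in>Pow R. mid (card T) (card R - card T) * (aseq (card T) * aseq (card R - card T)))"
    proof (intro sum.cong refl)
      fix T assume T: "T \<in> Pow R"
      have fT: "finite T" "finite (R - T)" using T finR by (auto intro: finite_subset)
      have cT: "card T < card S" "card (R - T) < card S" using m(3) T finR
        by (auto simp: R_def intro: le_imp_less_Suc card_mono)
      have h1: "\<forall>x\<in>T. l < x \<and> m < x" "\<forall>x\<in>R - T. m < x \<and> r < x"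
        using less.prems(2) m T unfolding R_def by auto
      have "(\<Sum>a\<in>permutations_of_set T. W l m a) = aseq (card T)"
        by (rule less.hyps[OF cT(1) fT(1) h1(1)])
      moreover have "(\<Sum>g\<in>permutations_of_set (R - T). W m r g) = aseq (card (R - T))"
        by (rule less.hyps[OF cT(2) fT(2) h1(2)])
      moreover have "card (R - T) = card R - card T" using T finR by (simp add: card_Diff_subset finite_subset)
      ultimately show "mid (card T) (card (R - T)) *
        ((\<Sum>a\<in>permutations_of_set T. W l m a) * (\<Sum>g\<in>permutations_of_set (R - T). W m r g)) =
        mid (card T) (card R - card T) * (aseq (card T) * aseq (card R - card T))" by simp
    qed
    also have "\<dots> = (\<Sum>j\<le>card R. of_nat (card R choose j) * (mid j (card R - j) * (aseq j * aseq (card R - j))))"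
      by (rule sum_pow_card[OF finR])
    also have "\<dots> = aseq (card S)"
      using m(3) by (simp add: R_def mult_ac)
    finally show ?thesis .
  qed
qed

lemma sumF:
  "finite S \<Longrightarrow> \<forall>x\<in>S. l < x \<and> x < r \<Longrightarrow>
    (\<Sum>a\<in>permutations_of_set S. W l r a * \<beta> ^ rl a) = fseq (card S)"
proof (induction "card S" arbitrary: S l r rule: less_induct)
  case less
  show ?case
  proof (cases "S = {}")
    case True
    then show ?thesis by simp
  next
    case False
    obtain m where m: "m \<in> S" "\<forall>x\<in>S - {m}. m < x" "card S = Suc (card (S - {m}))"
      using perm_min[OF less.prems(1) False] by blast
    define R where "R = S - {m}"
    have finR: "finite R" using less.prems by (simp add: R_def)
    have "(\<Sum>a\<in>permutations_of_set S. W l r a * \<beta> ^ rl a) =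
      (\<Sum>T\<in>Pow R. \<Sum>a\<in>permutations_of_set T. \<Sum>g\<in>permutations_of_set (R - T).
         W l r (a @ m # g) * \<beta> ^ rl (a @ m # g))"
      unfolding R_def by (rule perm_split[OF less.prems(1) m(1)])
    also have "\<dots> = (\<Sum>T\<in>Pow R. \<Sum>a\<in>permutations_of_set T. \<Sum>g\<in>permutations_of_set (R - T).
        (\<beta> * (if card T = 0 then u3 else 1)) * (W l m a * (W m r g * \<beta> ^ rl g)))"
    proof (intro sum.cong refl)
      fix T a g assume T: "T \<in> Pow R" and a: "a \<in> permutations_of_set T" and g: "g \<in> permutations_of_set (R - T)"
      have sa: "set a = T" "length a = card T" using a by (auto simp: permutations_of_set_def length_finite_permutations_of_set)
      have sg: "set g = R - T" "length g = card (R - T)" using g by (auto simp: permutations_of_set_def length_finite_permutations_of_set)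
      have ma: "\<forall>x\<in>set a. m < x" "\<forall>x\<in>set g. m < x" using sa sg T m(2) unfolding R_def by auto
      have "l < m" "m < r" using less.prems(2) m(1) by auto
      then show "W l r (a @ m # g) * \<beta> ^ rl (a @ m # g) =
         (\<beta> * (if card T = 0 then u3 else 1)) * (W l m a * (W m r g * \<beta> ^ rl g))"
        using wt_midF[OF _ _ ma] sa sg rl_append[OF ma] by (simp add: W_append flip: length_0_conv)
    qed
    also have "\<dots> = (\<Sum>T\<in>Pow R. (\<beta> * (if card T = 0 then u3 else 1)) *
        ((\<Sum>a\<in>permutations_of_set T. W l m a) * (\<Sum>g\<in>permutations_of_set (R - T). W m r g * \<beta> ^ rl g)))"
      by (simp add: sum_sum_mult)
    also have "\<dots> = (\<Sum>T\<in>Pow R. (\<beta> * (if card T = 0 then u3 else 1)) * (aseq (card T) * fseq (card R - card T)))"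
    proof (intro sum.cong refl)
      fix T assume T: "T \<in> Pow R"
      have fT: "finite T" "finite (R - T)" using T finR by (auto intro: finite_subset)
      have cT: "card (R - T) < card S" using m(3) T finR
        by (auto simp: R_def intro: le_imp_less_Suc card_mono)
      have h1: "\<forall>x\<in>T. l < x \<and> m < x" "\<forall>x\<in>R - T. m < x \<and> x < r"
        using less.prems(2) m T unfolding R_def by auto
      have "(\<Sum>a\<in>permutations_of_set T. W l m a) = aseq (card T)"
        by (rule sumA[OF fT(1) h1(1)])
      moreover have "(\<Sum>g\<in>permutations_of_set (R - T). W m r g * \<beta> ^ rl g) = fseq (card (R - T))"
        by (rule less.hyps[OF cT fT(2) h1(2)])
      moreover have "card (R - T) = card R - card T" using T finR by (simp add: card_Diff_subset finite_subset)
      ultimately show "(\<beta> * (if card T = 0 then u3 else 1)) *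
        ((\<Sum>a\<in>permutations_of_set T. W l m a) * (\<Sum>g\<in>permutations_of_set (R - T). W m r g * \<beta> ^ rl g)) =
        (\<beta> * (if card T = 0 then u3 else 1)) * (aseq (card T) * fseq (card R - card T))" by simp
    qed
    also have "\<dots> = (\<Sum>j\<le>card R. of_nat (card R choose j) * ((\<beta> * (if j = 0 then u3 else 1)) * (aseq j * fseq (card R - j))))"
      by (rule sum_pow_card[OF finR])
    also have "\<dots> = fseq (card S)"
      using m(3) by (simp add: R_def mult_ac sum_distrib_left)
    finally show ?thesis .
  qed
qed

lemma link:
  assumes sp: "\<sigma> \<in> permutations_of_set {1..n}"
  shows "p ^ statL \<sigma> * u3 ^ lrda \<sigma> * u4 ^ dd \<sigma> * \<beta> ^ RLmin \<sigma> = W 0 (n + 1) \<sigma> * \<beta> ^ rl \<sigma>"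
proof -
  have len: "length \<sigma> = n" using length_finite_permutations_of_set[OF sp] by simp
  have st: "set \<sigma> = {1..n}" using sp by (simp add: permutations_of_set_def)
  define e where "e = 0 # \<sigma> @ [n + 1]"
  have e_pv: "pval \<sigma> i = e ! i" if "i \<le> n" for i
    using that len by (cases i) (auto simp: e_def pval_def nth_append)
  have e_last: "e ! Suc n = n + 1" using len by (simp add: e_def nth_append)
  have e0: "e ! 0 = 0" by (simp add: e_def)
  have e_rng: "1 \<le> e ! i \<and> e ! i \<le> n" if H1: "1 \<le> i" "i \<le> n" for i
  proof -
    obtain k where k: "i = Suc k" using H1 by (cases i) auto
    have "k < length \<sigma>" using k H1 len by simp
    then have "\<sigma> ! k \<in> {1..n}" using st nth_mem by blast
    then show ?thesis using k \<open>k < length \<sigma>\<close> by (simp add: e_def nth_append)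
  qed
  have e_sig: "e ! Suc k = \<sigma> ! k" if "k < n" for k
    using that len by (simp add: e_def nth_append)
  have W: "W 0 (n + 1) \<sigma> = (\<Prod>k<n. wt (e ! k) (e ! Suc k) (e ! Suc (Suc k)))"
    unfolding W_nth len e_def by simp
  have rl: "\<beta> ^ rl \<sigma> = (\<Prod>k<n. if \<forall>j. k < j \<and> j < n \<longrightarrow> \<sigma> ! k < \<sigma> ! j then \<beta> else 1)"
    unfolding rl_prod len ..
  define PL where "PL i = (e ! (i - 1) < e ! i \<and> e ! (i + 1) < e ! i)" for i
  define PA where "PA i = (e ! (i - 1) < e ! i \<and> e ! i < e ! (i + 1))" for i
  define PD where "PD i = (e ! i < e ! (i - 1) \<and> e ! (i + 1) < e ! i)" for i
  define PR where "PR i = (\<forall>j. i < j \<and> j \<le> n \<longrightarrow> e ! i < e ! j)" for i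
  have sL: "statL \<sigma> = card {i\<in>{1..n}. PL i}"
  proof -
    have "{i. 1 \<le> i \<and> i < length \<sigma> \<and> pval \<sigma> (i - 1) < pval \<sigma> i \<and> pval \<sigma> (i + 1) < pval \<sigma> i}
        = {i\<in>{1..n}. PL i}"
    proof (intro set_eqI iffI)
      fix i assume "i \<in> {i. 1 \<le> i \<and> i < length \<sigma> \<and> pval \<sigma> (i - 1) < pval \<sigma> i \<and> pval \<sigma> (i + 1) < pval \<sigma> i}"
      then show "i \<in> {i\<in>{1..n}. PL i}" using len e_pv[of i] e_pv[of "i - 1"] e_pv[of "i + 1"]
        by (auto simp: PL_def)
    next
      fix i assume H: "i \<in> {i\<in>{1..n}. PL i}"
      have "i \<noteq> n" using H e_last e_rng[of n] by (auto simp: PL_def)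
      then show "i \<in> {i. 1 \<le> i \<and> i < length \<sigma> \<and> pval \<sigma> (i - 1) < pval \<sigma> i \<and> pval \<sigma> (i + 1) < pval \<sigma> i}"
        using H len e_pv[of i] e_pv[of "i - 1"] e_pv[of "i + 1"] by (auto simp: PL_def)
    qed
    then show ?thesis unfolding statL_def by simp
  qed
  have sA: "lrda \<sigma> = card {i\<in>{1..n}. PA i}"
  proof -
    have "{i. 1 \<le> i \<and> i \<le> length \<sigma> \<and> pval \<sigma> (i - 1) < pval \<sigma> i \<and> (i = length \<sigma> \<or> pval \<sigma> i < pval \<sigma> (i + 1))}
        = {i\<in>{1..n}. PA i}"
    proof (intro set_eqI iffI)
      fix i assume H: "i \<in> {i. 1 \<le> i \<and> i \<le> length \<sigma> \<and> pval \<sigma> (i - 1) < pval \<sigma> i \<and> (i = length \<sigma> \<or> pval \<sigma> i < pval \<sigma> (i + 1))}"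
      show "i \<in> {i\<in>{1..n}. PA i}"
      proof (cases "i = n")
        case True
        then show ?thesis using H len e_pv[of i] e_pv[of "i - 1"] e_last e_rng[of n] by (auto simp: PA_def)
      next
        case False
        then show ?thesis using H len e_pv[of i] e_pv[of "i - 1"] e_pv[of "i + 1"] by (auto simp: PA_def)
      qed
    next
      fix i assume H: "i \<in> {i\<in>{1..n}. PA i}"
      show "i \<in> {i. 1 \<le> i \<and> i \<le> length \<sigma> \<and> pval \<sigma> (i - 1) < pval \<sigma> i \<and> (i = length \<sigma> \<or> pval \<sigma> i < pval \<sigma> (i + 1))}"
      proof (cases "i = n")
        case True
        then show ?thesis using H len e_pv[of i] e_pv[of "i - 1"] by (auto simp: PA_def)
      next
        case False
        then show ?thesis using H len e_pv[of i] e_pv[of "i - 1"] e_pv[of "i + 1"] by (auto simp: PA_def)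
      qed
    qed
    then show ?thesis unfolding lrda_def by simp
  qed
  have sD: "dd \<sigma> = card {i\<in>{1..n}. PD i}"
  proof -
    have "{i. 1 < i \<and> i < length \<sigma> \<and> pval \<sigma> i < pval \<sigma> (i - 1) \<and> pval \<sigma> (i + 1) < pval \<sigma> i}
        = {i\<in>{1..n}. PD i}"
    proof (intro set_eqI iffI)
      fix i assume "i \<in> {i. 1 < i \<and> i < length \<sigma> \<and> pval \<sigma> i < pval \<sigma> (i - 1) \<and> pval \<sigma> (i + 1) < pval \<sigma> i}"
      then show "i \<in> {i\<in>{1..n}. PD i}" using len e_pv[of i] e_pv[of "i - 1"] e_pv[of "i + 1"]
        by (auto simp: PD_def)
    next
      fix i assume H: "i \<in> {i\<in>{1..n}. PD i}"
      have "i \<noteq> n" using H e_last e_rng[of n] by (auto simp: PD_def)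
      moreover have "i \<noteq> 1" using H e0 by (auto simp: PD_def)
      ultimately show "i \<in> {i. 1 < i \<and> i < length \<sigma> \<and> pval \<sigma> i < pval \<sigma> (i - 1) \<and> pval \<sigma> (i + 1) < pval \<sigma> i}"
        using H len e_pv[of i] e_pv[of "i - 1"] e_pv[of "i + 1"] by (auto simp: PD_def)
    qed
    then show ?thesis unfolding dd_def by simp
  qed
  have sR: "RLmin \<sigma> = card {i\<in>{1..n}. PR i}"
  proof -
    have "{i. 1 \<le> i \<and> i \<le> length \<sigma> \<and> (\<forall>j. i < j \<and> j \<le> length \<sigma> \<longrightarrow> pval \<sigma> i < pval \<sigma> j)}
        = {i\<in>{1..n}. PR i}"
      using len e_pv by (auto simp: PR_def)
    then show ?thesis unfolding RLmin_def by simp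
  qed
  have pR: "PR (Suc k) \<longleftrightarrow> (\<forall>j. k < j \<and> j < n \<longrightarrow> \<sigma> ! k < \<sigma> ! j)" if "k < n" for k
  proof
    assume H: "PR (Suc k)"
    show "\<forall>j. k < j \<and> j < n \<longrightarrow> \<sigma> ! k < \<sigma> ! j"
    proof (intro allI impI)
      fix j assume "k < j \<and> j < n"
      then show "\<sigma> ! k < \<sigma> ! j" using H[unfolded PR_def, rule_format, of "Suc j"] e_sig[of k] e_sig[of j] that by simp
    qed
  next
    assume H: "\<forall>j. k < j \<and> j < n \<longrightarrow> \<sigma> ! k < \<sigma> ! j"
    show "PR (Suc k)" unfolding PR_def
    proof (intro allI impI)
      fix j assume j: "Suc k < j \<and> j \<le> n"
      then obtain j' where j': "j = Suc j'" by (cases j) auto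
      then show "e ! Suc k < e ! j" using H j e_sig[of k] e_sig[of j'] that by simp
    qed
  qed
  have "p ^ statL \<sigma> * u3 ^ lrda \<sigma> * u4 ^ dd \<sigma> * \<beta> ^ RLmin \<sigma> =
     (\<Prod>i\<in>{Suc 0..n}. if PL i then p else 1) * (\<Prod>i\<in>{Suc 0..n}. if PA i then u3 else 1) *
     (\<Prod>i\<in>{Suc 0..n}. if PD i then u4 else 1) * (\<Prod>i\<in>{Suc 0..n}. if PR i then \<beta> else 1)"
    unfolding sL sA sD sR by (simp only: pow_card_prod[OF finite_atLeastAtMost] One_nat_def)
  also have "\<dots> = (\<Prod>k<n. (if PL (Suc k) then p else 1) * (if PA (Suc k) then u3 else 1) *
     (if PD (Suc k) then u4 else 1)) * (\<Prod>k<n. if PR (Suc k) then \<beta> else 1)"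
    unfolding prod.atLeast1_atMost_eq prod.distrib ..
  also have "\<dots> = W 0 (n + 1) \<sigma> * \<beta> ^ rl \<sigma>"
    unfolding W rl
    by (intro arg_cong2[where f = "(*)"] prod.cong refl) (auto simp: pR wt_def PL_def PA_def PD_def)
  finally show ?thesis .
qed

end


unbundle fps_syntax

lemma dd_nth: "fps_deriv (fps_deriv X) $ n = of_nat (Suc n) * (of_nat (Suc (Suc n)) * X $ Suc (Suc n))"
  by (simp add: fps_deriv_nth)

lemma aux_cancel: "(a::complex) \<noteq> 0 \<Longrightarrow> b \<noteq> 0 \<Longrightarrow> a * (b * (x / (b * a * F))) = x / F"
  by (cases "F = 0") (simp_all add: field_simps)

lemma fact2_cancel: "of_nat (Suc n) * (of_nat (Suc (Suc n)) * ((x::complex) / fact (Suc (Suc n)))) = x / fact n"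
proof -
  have "fact (Suc (Suc n)) = (of_nat (Suc (Suc n)) * of_nat (Suc n) * fact n :: complex)"
    by (simp only: fact_Suc mult.assoc)
  moreover have "(of_nat (Suc n) :: complex) \<noteq> 0" "(of_nat (Suc (Suc n)) :: complex) \<noteq> 0"
    by (simp_all only: of_nat_eq_0_iff)
  ultimately show ?thesis by (simp only: aux_cancel not_False_eq_True)
qed

lemma cosh2: "fps_deriv (fps_deriv (fps_cosh_ser (a::complex))) = fps_const (a^2) * fps_cosh_ser a"
proof (rule fps_ext)
  fix n
  show "fps_deriv (fps_deriv (fps_cosh_ser a)) $ n = (fps_const (a^2) * fps_cosh_ser a) $ n"
  proof (cases "even n")
    case True
    have "\<And>F. (if even (Suc (Suc n)) then a ^ Suc (Suc n) / F else 0) = a^2 * a^n / F"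
      using True by (simp add: power2_eq_square)
    then have "fps_cosh_ser a $ Suc (Suc n) = a^2 * a^n / of_nat (fact (Suc (Suc n)))"
      unfolding fps_cosh_ser_def fps_nth_Abs_fps .
    then have "fps_cosh_ser a $ Suc (Suc n) = a^2 * a^n / fact (Suc (Suc n))"
      by (simp only: of_nat_fact)
    then have "fps_deriv (fps_deriv (fps_cosh_ser a)) $ n = a^2 * a^n / fact n"
      unfolding dd_nth by (simp only: fact2_cancel)
    then show ?thesis using True by (simp add: fps_cosh_ser_def)
  next
    case False
    then show ?thesis unfolding dd_nth by (simp add: fps_cosh_ser_def)
  qed
qed

lemma sinh2: "fps_deriv (fps_deriv (fps_sinh_half_div (s::complex))) = fps_const (s^2/4) * fps_sinh_half_div s"
proof (rule fps_ext)
  fix n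
  show "fps_deriv (fps_deriv (fps_sinh_half_div s)) $ n = (fps_const (s^2/4) * fps_sinh_half_div s) $ n"
  proof (cases "odd n")
    case True
    then obtain m where m: "n = Suc m" by (cases n) auto
    have "\<And>F. (if odd (Suc (Suc n)) then s ^ (Suc (Suc n) - 1) / (2 ^ Suc (Suc n) * F) else 0) = (s^2/4) * (s ^ m / 2 ^ n) / F"
      using True by (simp add: m power2_eq_square mult_ac)
    then have "fps_sinh_half_div s $ Suc (Suc n) = (s^2/4) * (s ^ m / 2 ^ n) / of_nat (fact (Suc (Suc n)))"
      unfolding fps_sinh_half_div_def fps_nth_Abs_fps .
    then have "fps_sinh_half_div s $ Suc (Suc n) = (s^2/4) * (s ^ m / 2 ^ n) / fact (Suc (Suc n))"
      by (simp only: of_nat_fact)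
    then have "fps_deriv (fps_deriv (fps_sinh_half_div s)) $ n = (s^2/4) * (s ^ m / 2 ^ n) / fact n"
      unfolding dd_nth by (simp only: fact2_cancel)
    moreover have "n - 1 = m" using m by simp
    ultimately show ?thesis using True by (simp add: fps_sinh_half_div_def)
  next
    case False
    then show ?thesis unfolding dd_nth by (simp add: fps_sinh_half_div_def)
  qed
qed

lemma conv_div:
  "(\<Sum>j\<le>k. of_nat (k choose j) * x j * y (k - j) * c j) / fact k =
   (\<Sum>j\<le>k. (x j / fact j) * (y (k - j) / fact (k - j)) * (c j :: complex))"
  unfolding sum_divide_distrib
proof (rule sum.cong[OF refl])
  fix j assume "j \<in> {..k}"
  then have "j \<le> k" by simp
  then show "of_nat (k choose j) * x j * y (k - j) * c j / fact k = x j / fact j * (y (k - j) / fact (k - j)) * c j"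
    by (simp add: binomial_fact field_simps)
qed

definition Dfps :: "complex \<Rightarrow> complex \<Rightarrow> complex \<Rightarrow> complex fps" where
  "Dfps p u3 u4 = Abs_fps (\<lambda>k. if k = 0 then 0 else aseq p u3 u4 k / fact k)"

definition Ffps :: "complex \<Rightarrow> complex \<Rightarrow> complex \<Rightarrow> complex \<Rightarrow> complex fps" where
  "Ffps p u3 u4 \<beta> = Abs_fps (\<lambda>k. fseq p u3 u4 \<beta> k / fact k)"

lemma aux_cancel1: "(a::complex) \<noteq> 0 \<Longrightarrow> a * (x / (a * F)) = x / F"
  by (cases "F = 0") (simp_all add: field_simps)

lemma deriv_Suc_div: "of_nat (k + 1) * (x / fact (Suc k)) = (x::complex) / fact k"
proof -
  have "(of_nat (k + 1) :: complex) \<noteq> 0" by (simp only: of_nat_eq_0_iff)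
  moreover have "fact (Suc k) = (of_nat (k + 1) * fact k :: complex)" by (simp only: fact_Suc Suc_eq_plus1[symmetric])
  ultimately show ?thesis by (simp only: aux_cancel1 not_False_eq_True)
qed

lemma D_ode: "fps_deriv (Dfps p u3 u4) = fps_const p + fps_const (u3 + u4) * Dfps p u3 u4 + Dfps p u3 u4 * Dfps p u3 u4"
proof (rule fps_ext)
  fix k
  define D where "D = Dfps p u3 u4"
  have Dn: "D $ j = (if j = 0 then 0 else aseq p u3 u4 j / fact j)" for j
    by (simp add: D_def Dfps_def)
  have trm: "(aseq p u3 u4 j / fact j) * (aseq p u3 u4 (k - j) / fact (k - j)) * mid p u3 u4 j (k - j) =
     D $ j * D $ (k - j) + u3 * ((1::complex fps) $ j * D $ (k - j)) + u4 * (D $ j * (1::complex fps) $ (k - j))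
     + p * ((1::complex fps) $ j * (1::complex fps) $ (k - j))" for j
    by (cases "j = 0"; cases "k - j = 0") (auto simp: Dn mid_def)
  have "fps_deriv D $ k = aseq p u3 u4 (Suc k) / fact k"
    by (simp add: fps_deriv_nth Dn deriv_Suc_div del: of_nat_Suc)
  also have "\<dots> = (\<Sum>j\<le>k. (aseq p u3 u4 j / fact j) * (aseq p u3 u4 (k - j) / fact (k - j)) * mid p u3 u4 j (k - j))"
    unfolding aseq.simps by (rule conv_div[of k "aseq p u3 u4" "aseq p u3 u4" "\<lambda>j. mid p u3 u4 j (k - j)"])
  also have "\<dots> = (\<Sum>j\<le>k. D $ j * D $ (k - j) + u3 * ((1::complex fps) $ j * D $ (k - j)) + u4 * (D $ j * (1::complex fps) $ (k - j))
     + p * ((1::complex fps) $ j * (1::complex fps) $ (k - j)))"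
    by (simp only: trm)
  also have "\<dots> = (D * D) $ k + u3 * (((1::complex fps) * D) $ k) + u4 * ((D * (1::complex fps)) $ k) + p * (((1::complex fps) * 1) $ k)"
    by (simp only: sum.distrib sum_distrib_left[symmetric] fps_mult_nth atMost_atLeast0)
  also have "\<dots> = (fps_const p + fps_const (u3 + u4) * D + D * D) $ k"
    by (simp add: algebra_simps)
  finally show "fps_deriv (Dfps p u3 u4) $ k = (fps_const p + fps_const (u3 + u4) * Dfps p u3 u4 + Dfps p u3 u4 * Dfps p u3 u4) $ k"
    by (simp add: D_def)
qed

lemma F_ode: "fps_deriv (Ffps p u3 u4 \<beta>) = fps_const \<beta> * ((Dfps p u3 u4 + fps_const u3) * Ffps p u3 u4 \<beta>)"
proof (rule fps_ext)
  fix k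
  define D where "D = Dfps p u3 u4"
  define F where "F = Ffps p u3 u4 \<beta>"
  have Dn: "D $ j = (if j = 0 then 0 else aseq p u3 u4 j / fact j)" for j
    by (simp add: D_def Dfps_def)
  have Fn: "F $ j = fseq p u3 u4 \<beta> j / fact j" for j
    by (simp add: F_def Ffps_def)
  have trm: "(aseq p u3 u4 j / fact j) * (fseq p u3 u4 \<beta> (k - j) / fact (k - j)) * (if j = 0 then u3 else 1) =
     (D + fps_const u3) $ j * F $ (k - j)" for j
    by (cases "j = 0") (auto simp: Dn Fn)
  have "fps_deriv F $ k = fseq p u3 u4 \<beta> (Suc k) / fact k"
    by (simp add: fps_deriv_nth Fn deriv_Suc_div del: of_nat_Suc)
  also have "\<dots> = \<beta> * ((\<Sum>j\<le>k. of_nat (k choose j) * aseq p u3 u4 j * fseq p u3 u4 \<beta> (k - j) * (if j = 0 then u3 else 1)) / fact k)"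
    by simp
  also have "\<dots> = \<beta> * (\<Sum>j\<le>k. (aseq p u3 u4 j / fact j) * (fseq p u3 u4 \<beta> (k - j) / fact (k - j)) * (if j = 0 then u3 else 1))"
    using conv_div[of k "aseq p u3 u4" "fseq p u3 u4 \<beta>" "\<lambda>j. if j = 0 then u3 else 1"] by simp
  also have "\<dots> = \<beta> * ((D + fps_const u3) * F) $ k"
    by (simp only: trm fps_mult_nth atMost_atLeast0)
  finally show "fps_deriv (Ffps p u3 u4 \<beta>) $ k = (fps_const \<beta> * ((Dfps p u3 u4 + fps_const u3) * Ffps p u3 u4 \<beta>)) $ k"
    by (simp add: D_def F_def)
qed

lemma ode_unique:
  fixes X K :: "complex fps"
  assumes "fps_deriv X = K * X" "X $ 0 = 0"
  shows "X = 0"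
proof -
  have "X $ n = 0" for n
  proof (induction n rule: less_induct)
    case (less n)
    show ?case
    proof (cases n)
      case 0
      then show ?thesis using assms(2) by simp
    next
      case (Suc m)
      have "(K * X) $ m = 0"
        unfolding fps_mult_nth using less Suc by (intro sum.neutral) auto
      then have "fps_deriv X $ m = 0" using assms(1) by simp
      then show ?thesis using Suc by (simp add: fps_deriv_nth del: of_nat_Suc)
    qed
  qed
  then show ?thesis by (intro fps_ext) simp
qed

lemma ring_step:
  fixes G G' G'' D D' k S4 :: "complex fps"
  assumes "G'' = S4 * G" "D' = (k * k - S4) + (k + k) * D + D * D"
  shows "G' * (D + k) + G * D' + G'' = (D + k) * (G * (D + k) + G')"
  unfolding assms by (simp add: algebra_simps)

theorem theorem4p1:
  fixes u1 u2 u3 u4 \<beta> :: complex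
  defines "s \<equiv> csqrt ((u3 + u4)^2 - 4 * u1 * u2)"
  shows "Abs_fps (\<lambda>n. (\<Sum>\<sigma>\<in>permutations_of_set {1..n}.
            (u1 * u2) ^ statL \<sigma> * u3 ^ lrda \<sigma> * u4 ^ dd \<sigma> * \<beta> ^ RLmin \<sigma>) / of_nat (fact n))
       = fps_exp (\<beta> / 2 * (u3 - u4)) *
         fps_gpow (fps_cosh_ser (s / 2) - fps_const (u3 + u4) * fps_sinh_half_div s) (- \<beta>)"
proof -
  define p where "p = u1 * u2"
  define c where "c = u3 + u4"
  have hs: "s^2 = c^2 - 4 * p" unfolding s_def c_def p_def by (simp add: power2_csqrt mult.assoc)
  define G where "G = fps_cosh_ser (s / 2) - fps_const c * fps_sinh_half_div s"
  define D where "D = Dfps p u3 u4"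
  define k where "k = fps_const (c / 2)"
  define S4 where "S4 = fps_const (s^2 / 4)"
  have G2: "fps_deriv (fps_deriv G) = S4 * G"
  proof -
    have "fps_deriv (fps_deriv G) = fps_const ((s/2)^2) * fps_cosh_ser (s / 2) - fps_const c * (fps_const (s^2/4) * fps_sinh_half_div s)"
      unfolding G_def by (simp only: fps_deriv_sub fps_deriv_mult_const_left cosh2 sinh2)
    also have "\<dots> = S4 * G" unfolding S4_def G_def by (simp add: power_divide algebra_simps)
    finally show ?thesis .
  qed
  have G0: "G $ 0 = 1" by (simp add: G_def fps_cosh_ser_def fps_sinh_half_div_def)
  have G1: "fps_deriv G $ 0 = - (c / 2)" by (simp add: G_def fps_cosh_ser_def fps_sinh_half_div_def fps_deriv_nth)
  have D0: "D $ 0 = 0" by (simp add: D_def Dfps_def)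
  have Dode: "fps_deriv D = (k * k - S4) + (k + k) * D + D * D"
  proof -
    have "p = c/2 * (c/2) - s^2/4" using hs by (simp add: field_simps power2_eq_square)
    then have "fps_const p = k * k - S4" unfolding k_def S4_def by simp
    moreover have "fps_const (u3 + u4) = k + k" unfolding k_def c_def by simp
    ultimately show ?thesis unfolding D_def D_ode by simp
  qed
  define Z where "Z = G * (D + k) + fps_deriv G"
  have "fps_deriv Z = (D + k) * Z"
    unfolding Z_def using ring_step[OF G2 Dode, of "fps_deriv G"] by (simp add: add_ac k_def)
  moreover have "Z $ 0 = 0" unfolding Z_def using G0 G1 D0 by (simp add: k_def)
  ultimately have "Z = 0" by (rule ode_unique)
  then have Gd: "fps_deriv G = - ((D + k) * G)" unfolding Z_def by (simp add: eq_neg_iff_add_eq_0 algebra_simps)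
  have G10: "(G - 1) $ 0 = 0" using G0 by simp
  have Ginv: "inverse G * G = 1" using G0 by (simp add: inverse_mult_eq_1)
  have L: "fps_deriv (fps_log G) = - (D + k)"
  proof -
    have "(1 + fps_X) oo (G - 1) = G"
      using G10 by (simp add: fps_compose_add_distrib)
    then have "inverse (1 + fps_X) oo (G - 1) = inverse G"
      using G10 by (simp add: fps_inverse_compose)
    then have "fps_deriv (fps_log G) = inverse G * fps_deriv G"
      unfolding fps_log_def using G10 by (simp add: fps_compose_deriv fps_ln_deriv)
    also have "\<dots> = - (D + k) * (inverse G * G)" unfolding Gd by (simp add: algebra_simps)
    finally show ?thesis using Ginv by simp
  qed
  define P where "P = fps_gpow G (- \<beta>)"
  have L0: "fps_log G $ 0 = 0" by (simp add: fps_log_def fps_ln_def)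
  have Pd: "fps_deriv P = fps_const \<beta> * (D + k) * P"
  proof -
    have "fps_deriv P = (fps_const (- \<beta>) * fps_exp (- \<beta>) oo fps_log G) * fps_deriv (fps_log G)"
      unfolding P_def fps_gpow_def using L0 by (simp add: fps_compose_deriv fps_exp_deriv)
    also have "\<dots> = fps_const (- \<beta>) * P * (- (D + k))"
      unfolding L P_def fps_gpow_def using L0 by (simp add: fps_compose_mult_distrib)
    also have "\<dots> = fps_const \<beta> * (D + k) * P"
      by (simp add: algebra_simps fps_const_neg[symmetric] del: fps_const_neg)
    finally show ?thesis .
  qed
  have P0: "P $ 0 = 1" by (simp add: P_def fps_gpow_def)
  define A0 where "A0 = \<beta> / 2 * (u3 - u4)"
  define H where "H = fps_exp A0 * P"
  have cst: "fps_const A0 + fps_const \<beta> * k = fps_const \<beta> * fps_const u3"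
    unfolding k_def c_def A0_def by (simp add: field_simps)
  have Hd: "fps_deriv H = fps_const \<beta> * ((D + fps_const u3) * H)"
  proof -
    have "fps_deriv H = (fps_const A0 + fps_const \<beta> * (D + k)) * H"
      unfolding H_def by (simp add: fps_exp_deriv Pd algebra_simps)
    also have "\<dots> = fps_const \<beta> * ((D + fps_const u3) * H)"
      using arg_cong[OF cst, of "\<lambda>x. H * x"] by (simp add: algebra_simps)
    finally show ?thesis .
  qed
  have H0: "H $ 0 = 1" using P0 by (simp add: H_def)
  define F where "F = Ffps p u3 u4 \<beta>"
  have F0: "F $ 0 = 1" by (simp add: F_def Ffps_def)
  have "fps_deriv (F - H) = (fps_const \<beta> * (D + fps_const u3)) * (F - H)"
    using Hd F_ode[of p u3 u4 \<beta>] unfolding F_def D_def by (simp add: algebra_simps)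
  moreover have "(F - H) $ 0 = 0" using F0 H0 by simp
  ultimately have "F - H = 0" by (rule ode_unique)
  then have FH: "F = H" by simp
  have lhs: "Abs_fps (\<lambda>n. (\<Sum>\<sigma>\<in>permutations_of_set {1..n}.
            (u1 * u2) ^ statL \<sigma> * u3 ^ lrda \<sigma> * u4 ^ dd \<sigma> * \<beta> ^ RLmin \<sigma>) / of_nat (fact n)) = F"
  proof (rule fps_ext)
    fix n
    have "(\<Sum>\<sigma>\<in>permutations_of_set {1..n}. (u1 * u2) ^ statL \<sigma> * u3 ^ lrda \<sigma> * u4 ^ dd \<sigma> * \<beta> ^ RLmin \<sigma>)
       = (\<Sum>\<sigma>\<in>permutations_of_set {1..n}. W p u3 u4 0 (n + 1) \<sigma> * \<beta> ^ rl \<sigma>)"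
      unfolding p_def by (intro sum.cong refl link)
    also have "\<dots> = fseq p u3 u4 \<beta> (card {1..n})"
      by (rule sumF) auto
    finally show "Abs_fps (\<lambda>n. (\<Sum>\<sigma>\<in>permutations_of_set {1..n}.
            (u1 * u2) ^ statL \<sigma> * u3 ^ lrda \<sigma> * u4 ^ dd \<sigma> * \<beta> ^ RLmin \<sigma>) / of_nat (fact n)) $ n = F $ n"
      by (simp add: F_def Ffps_def)
  qed
  show ?thesis unfolding lhs FH H_def P_def A0_def G_def c_def ..
qed

end
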